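(* Let $\mathfrak{I}=(\mathcal{I},[\mathcal{F}_1,\dots,\mathcal{F}_k],\mathcal{X},\pi,\sim,\mathcal{S})$ be a domain constrained interpretation and $C_1,\dots,C_4,D_1,\dots,D_4$ natural concepts that are fully specified by their features in $\mathfrak{I}$, i.e. $N^{\mathcal{I}}=\{d\in\Delta^{\mathcal{I}}\mid\varphi(N)\subseteq\pi(d)\}$ for each of them. Suppose $C_1^{\mathcal{I}}\neq\emptyset$ and $\mathfrak{I}$ satisfies the analogy assertions $C_1:C_2::C_3:C_4$, $D_1:D_2::D_3:D_4$, $D_1:D_3::D_2:D_4$ and the concept inclusions $C_1\sqsubseteq D_1$, $C_2\sqsubseteq D_2$, $C_3\sqsubseteq D_3$. Then $\mathfrak{I}$ also satisfies $C_4\sqsubseteq D_4$.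
   Context: Concepts: $C,D::=\top\mid\bot\mid A\mid C\sqcap D\mid \exists r.C\mid N$; natural concepts: $N,N'::=A'\mid N\sqcap N'\mid N\bowtie N'\mid \exists r'.N$, with $A$ a concept name, $A'$ a natural concept name, $r$ a role name, $r'$ an intra-domain role name. A domain constrained interpretation is $\mathfrak{I}=(\mathcal{I},[\mathcal{F}_1,\dots,\mathcal{F}_k],\mathcal{X},\pi,\sim,\mathcal{S})$ where $\mathcal{I}=(\Delta^{\mathcal{I}},\cdot^{\mathcal{I}})$ is a classical DL interpretation, $[\mathcal{F}_1,\dots,\mathcal{F}_k]$ partitions a nonempty finite set $\mathcal{F}$, $\mathcal{X}\subseteq2^{\mathcal{F}}$ with $\mathcal{F}\in\mathcal{X}$, $\pi:\Delta^{\mathcal{I}}\to2^{\mathcal{F}}$, $\sim$ an equivalence relation on $\{1,\dots,k\}$, $\mathcal{S}=\{\sigma_{(s,t)}\mid(s,t)\in\sim\}$ with $\sigma_{(s,t)}:\mathcal{F}_s\to\mathcal{F}_t$ bijections. With $\mathcal{C}=\{G\subseteq\mathcal{F}\mid X\not\subseteq G\ \forall X\in\mathcal{X}\}$ and $\mathcal{C}^i=\{G\in\mathcal{C}\mid G\subseteq\mathcal{F}_i\}$ it is required: (1) $X\not\subseteq\pi(d)$ for all $d$, $X\in\mathcal{X}$; (2) each $G\in\mathcal{C}$ is $\pi(d)$ for some $d$; (3) $\sigma_{(s,t)}^{-1}=\sigma_{(t,s)}$, $\sigma_{(t,u)}\circ\sigma_{(s,t)}=\sigma_{(s,u)}$;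 (4) $\sigma_{(i,j)}(G)\in\mathcal{C}$ for $G\in\mathcal{C}^i$, $(i,j)\in\sim$; (5) $\{f,g\}\in\mathcal{X}$ whenever $f\in\mathcal{F}_i$, $g\in\mathcal{F}_j$, $(i,j)\in\sim$, $i\neq j$. $\varphi(C)=\bigcap\{\pi(d)\mid d\in C^{\mathcal{I}}\}$ ($=\mathcal{F}$ if $C^{\mathcal{I}}=\emptyset$). Concepts are interpreted as usual, with $(N\bowtie N')^{\mathcal{I}}=\{d\mid\varphi(N)\cap\varphi(N')\subseteq\pi(d)\}$, and every intra-domain role name $r$ interpreted as an intra-domain relation: there is $\kappa_r:2^{\mathcal{F}}\to2^{\mathcal{F}}$ with $(\exists r.C)^{\mathcal{I}}=\{d\mid\kappa_r(\varphi(C))\subseteq\pi(d)\}$ for all $C$, $\kappa_r(G)=\bigcup_i\kappa_r(G\cap\mathcal{F}_i)$ for $G\in\mathcal{C}$, $\kappa_r(G)\subseteq\mathcal{F}_i$ for $G\in\mathcal{C}^i$, $\kappa_r(\sigma_{(i,j)}(G))=\sigma_{(i,j)}(\kappa_r(G))$ for $(i,j)\in\sim$, $G\in\mathcal{C}^i$, and $\kappa_r(G)\neq\emptyset$ for $G\in\mathcal{C}^i\setminus\{\emptyset\}$. $\delta(C)=\{i\mid\mathcal{F}_i\cap\varphi(C)\neq\emptyset\}$. For $U=\{(s_1,t_1),\dots,(s_l,t_l)\}\subseteq\sim$ with pairwise distinct $s_i$ and pairwise distinct $t_i$, the domain translation $\sigma_U:\mathcal{F}\to\mathcal{F}$ maps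 $f\in\mathcal{F}_{s_i}$ to $\sigma_{(s_i,t_i)}(f)$ and fixes all other features; $\mathrm{src}(U)=\{s_i\}$, $\mathrm{tgt}(U)=\{t_i\}$. $\mu(C,D)$ is the set of $\sigma_U$ with $\varphi(D)=\sigma_U(\varphi(C))$, $\mathrm{src}(U)\subseteq\delta(C)$, $\mathrm{tgt}(U)\cap(\delta(C)\setminus\mathrm{src}(U))=\emptyset$. An analogy assertion $C_1:C_2::D_1:D_2$ is satisfied in $\mathfrak{I}$ iff $\mu(C_1,C_2)\cap\mu(D_1,D_2)\neq\emptyset$; a concept inclusion $C\sqsubseteq D$ is satisfied iff $C^{\mathcal{I}}\subseteq D^{\mathcal{I}}$. *)

theory Defs
  imports Main
begin

text \<open>Concept names 'c, role names 'r. Bowtie is only allowed on natural concepts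
(see wf_concept / natural).\<close>

datatype ('c, 'r) concept =
    Top
  | Bot
  | CName 'c
  | Conj "('c, 'r) concept" "('c, 'r) concept"
  | Ex 'r "('c, 'r) concept"
  | Bowtie "('c, 'r) concept" "('c, 'r) concept"

text \<open>The domain Delta is the whole type 'd. The partition is F_1..F_k given by
  parts i for i in {1..k}. sim is the relation on {1..k}, sigma s t the bijection
  sigma_(s,t). nat_names / intra_roles are the natural concept names and intra-domain
  role names of the signature.\<close>

record ('d, 'c, 'r, 'f) dci =
  nat_names :: "'c set"
  intra_roles :: "'r set"
  cint :: "'c \<Rightarrow> 'd set"
  rint :: "'r \<Rightarrow> ('d \<times> 'd) set"
  kk :: nat
  parts :: "nat \<Rightarrow> 'f set"
  Xs :: "'f set set"
  pi :: "'d \<Rightarrow> 'f set"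
  sim :: "(nat \<times> nat) set"
  sigma :: "nat \<Rightarrow> nat \<Rightarrow> 'f \<Rightarrow> 'f"

definition feats :: "('d, 'c, 'r, 'f) dci \<Rightarrow> 'f set" where
  "feats I = (\<Union>i\<in>{1..kk I}. parts I i)"

definition consistent_sets :: "('d, 'c, 'r, 'f) dci \<Rightarrow> 'f set set" where
  "consistent_sets I = {G. G \<subseteq> feats I \<and> (\<forall>X\<in>Xs I. \<not> X \<subseteq> G)}"

definition consistent_sets_in :: "('d, 'c, 'r, 'f) dci \<Rightarrow> nat \<Rightarrow> 'f set set" where
  "consistent_sets_in I i = {G \<in> consistent_sets I. G \<subseteq> parts I i}"

text \<open>phi(S) for a set S of individuals (phi(C) = phi(C^I)).\<close>
definition phi :: "('d, 'c, 'r, 'f) dci \<Rightarrow> 'd set \<Rightarrow> 'f set" where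
  "phi I S = (if S = {} then feats I else (\<Inter>d\<in>S. pi I d))"

fun ext :: "('d, 'c, 'r, 'f) dci \<Rightarrow> ('c, 'r) concept \<Rightarrow> 'd set" where
  "ext I Top = UNIV"
| "ext I Bot = {}"
| "ext I (CName A) = cint I A"
| "ext I (Conj C D) = ext I C \<inter> ext I D"
| "ext I (Ex r C) = {d. \<exists>e. (d, e) \<in> rint I r \<and> e \<in> ext I C}"
| "ext I (Bowtie N N') = {d. phi I (ext I N) \<inter> phi I (ext I N') \<subseteq> pi I d}"

fun natural :: "'c set \<Rightarrow> 'r set \<Rightarrow> ('c, 'r) concept \<Rightarrow> bool" where
  "natural NC IR (CName A) = (A \<in> NC)"
| "natural NC IR (Conj N N') = (natural NC IR N \<and> natural NC IR N')"
| "natural NC IR (Bowtie N N') = (natural NC IR N \<and> natural NC IR N')"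
| "natural NC IR (Ex r N) = (r \<in> IR \<and> natural NC IR N)"
| "natural NC IR Top = False"
| "natural NC IR Bot = False"

fun wf_concept :: "'c set \<Rightarrow> 'r set \<Rightarrow> ('c, 'r) concept \<Rightarrow> bool" where
  "wf_concept NC IR Top = True"
| "wf_concept NC IR Bot = True"
| "wf_concept NC IR (CName A) = True"
| "wf_concept NC IR (Conj C D) = (wf_concept NC IR C \<and> wf_concept NC IR D)"
| "wf_concept NC IR (Ex r C) = wf_concept NC IR C"
| "wf_concept NC IR (Bowtie N N') = (natural NC IR N \<and> natural NC IR N')"

definition intra_domain :: "('d, 'c, 'r, 'f) dci \<Rightarrow> 'r \<Rightarrow> bool" where
  "intra_domain I r \<longleftrightarrow> (\<exists>\<kappa> :: 'f set \<Rightarrow> 'f set.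
     (\<forall>G. G \<subseteq> feats I \<longrightarrow> \<kappa> G \<subseteq> feats I) \<and>
     (\<forall>C. wf_concept (nat_names I) (intra_roles I) C \<longrightarrow>
        ext I (Ex r C) = {d. \<kappa> (phi I (ext I C)) \<subseteq> pi I d}) \<and>
     (\<forall>G\<in>consistent_sets I. \<kappa> G = (\<Union>i\<in>{1..kk I}. \<kappa> (G \<inter> parts I i))) \<and>
     (\<forall>i\<in>{1..kk I}. \<forall>G\<in>consistent_sets_in I i. \<kappa> G \<subseteq> parts I i) \<and>
     (\<forall>i j G. (i, j) \<in> sim I \<longrightarrow> G \<in> consistent_sets_in I i \<longrightarrow>
        \<kappa> (sigma I i j ` G) = sigma I i j ` (\<kappa> G)) \<and>
     (\<forall>i\<in>{1..kk I}. \<forall>G\<in>consistent_sets_in I i. G \<noteq> {} \<longrightarrow> \<kappa> G \<noteq> {}))"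

definition is_dci :: "('d, 'c, 'r, 'f) dci \<Rightarrow> bool" where
  "is_dci I \<longleftrightarrow>
     \<comment> \<open>partition of a nonempty finite feature set\<close>
     finite (feats I) \<and> feats I \<noteq> {} \<and>
     (\<forall>i\<in>{1..kk I}. parts I i \<noteq> {}) \<and>
     (\<forall>i\<in>{1..kk I}. \<forall>j\<in>{1..kk I}. i \<noteq> j \<longrightarrow> parts I i \<inter> parts I j = {}) \<and>
     \<comment> \<open>X is a set of subsets of F containing F\<close>
     Xs I \<subseteq> Pow (feats I) \<and> feats I \<in> Xs I \<and>
     (\<forall>d. pi I d \<subseteq> feats I) \<and>
     equiv {1..kk I} (sim I) \<and>
     (\<forall>(s, t)\<in>sim I. bij_betw (sigma I s t) (parts I s) (parts I t)) \<and>
     \<comment> \<open>(1)\<close>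
     (\<forall>d. \<forall>X\<in>Xs I. \<not> X \<subseteq> pi I d) \<and>
     \<comment> \<open>(2)\<close>
     (\<forall>G\<in>consistent_sets I. \<exists>d. pi I d = G) \<and>
     \<comment> \<open>(3)\<close>
     (\<forall>s t. (s, t) \<in> sim I \<longrightarrow> (\<forall>f\<in>parts I s. sigma I t s (sigma I s t f) = f)) \<and>
     (\<forall>s t u. (s, t) \<in> sim I \<longrightarrow> (t, u) \<in> sim I \<longrightarrow>
        (\<forall>f\<in>parts I s. sigma I t u (sigma I s t f) = sigma I s u f)) \<and>
     \<comment> \<open>(4)\<close>
     (\<forall>i j G. (i, j) \<in> sim I \<longrightarrow> G \<in> consistent_sets_in I i \<longrightarrow>
        sigma I i j ` G \<in> consistent_sets I) \<and>
     \<comment> \<open>(5)\<close>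
     (\<forall>i j f g. (i, j) \<in> sim I \<longrightarrow> i \<noteq> j \<longrightarrow> f \<in> parts I i \<longrightarrow> g \<in> parts I j \<longrightarrow>
        {f, g} \<in> Xs I) \<and>
     \<comment> \<open>intra-domain role names are interpreted as intra-domain relations\<close>
     (\<forall>r\<in>intra_roles I. intra_domain I r)"

definition delta :: "('d, 'c, 'r, 'f) dci \<Rightarrow> ('c, 'r) concept \<Rightarrow> nat set" where
  "delta I C = {i\<in>{1..kk I}. parts I i \<inter> phi I (ext I C) \<noteq> {}}"

definition admissible_U :: "('d, 'c, 'r, 'f) dci \<Rightarrow> (nat \<times> nat) set \<Rightarrow> bool" where
  "admissible_U I U \<longleftrightarrow> U \<subseteq> sim I \<and> inj_on fst U \<and> inj_on snd U"

definition dom_trans :: "('d, 'c, 'r, 'f) dci \<Rightarrow> (nat \<times> nat) set \<Rightarrow> 'f \<Rightarrow> 'f" where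
  "dom_trans I U f =
     (if \<exists>p\<in>U. f \<in> parts I (fst p)
      then (let p = (THE p. p \<in> U \<and> f \<in> parts I (fst p)) in sigma I (fst p) (snd p) f)
      else f)"

definition mu :: "('d, 'c, 'r, 'f) dci \<Rightarrow> ('c, 'r) concept \<Rightarrow> ('c, 'r) concept
                   \<Rightarrow> ('f \<Rightarrow> 'f) set" where
  "mu I C D = {dom_trans I U | U. admissible_U I U \<and>
       phi I (ext I D) = dom_trans I U ` phi I (ext I C) \<and>
       fst ` U \<subseteq> delta I C \<and>
       snd ` U \<inter> (delta I C - fst ` U) = {}}"

definition sat_analogy :: "('d, 'c, 'r, 'f) dci \<Rightarrow> ('c, 'r) concept \<Rightarrow> ('c, 'r) concept
                           \<Rightarrow> ('c, 'r) concept \<Rightarrow> ('c, 'r) concept \<Rightarrow> bool" where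
  "sat_analogy I C1 C2 D1 D2 \<longleftrightarrow> mu I C1 C2 \<inter> mu I D1 D2 \<noteq> {}"

definition sat_inclusion :: "('d, 'c, 'r, 'f) dci \<Rightarrow> ('c, 'r) concept \<Rightarrow> ('c, 'r) concept \<Rightarrow> bool" where
  "sat_inclusion I C D \<longleftrightarrow> ext I C \<subseteq> ext I D"

definition fully_specified :: "('d, 'c, 'r, 'f) dci \<Rightarrow> ('c, 'r) concept \<Rightarrow> bool" where
  "fully_specified I N \<longleftrightarrow> ext I N = {d. phi I (ext I N) \<subseteq> pi I d}"

definition nat_fs :: "('d, 'c, 'r, 'f) dci \<Rightarrow> ('c, 'r) concept \<Rightarrow> bool" where
  "nat_fs I N \<longleftrightarrow> natural (nat_names I) (intra_roles I) N \<and> fully_specified I N"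

end

theory Submission
  imports Defs
begin

lemma dci_c:
  assumes "is_dci I"
  shows c3: "\<forall>i\<in>{1..kk I}. \<forall>j\<in>{1..kk I}. i \<noteq> j \<longrightarrow> parts I i \<inter> parts I j = {}"
    and c6: "\<forall>d. pi I d \<subseteq> feats I"
    and c7: "equiv {1..kk I} (sim I)"
    and c8: "\<forall>(s, t)\<in>sim I. bij_betw (sigma I s t) (parts I s) (parts I t)"
    and c9: "\<forall>d. \<forall>X\<in>Xs I. \<not> X \<subseteq> pi I d"
    and c11: "\<forall>s t. (s, t) \<in> sim I \<longrightarrow> (\<forall>f\<in>parts I s. sigma I t s (sigma I s t f) = f)"
    and c12: "\<forall>s t u. (s, t) \<in> sim I \<longrightarrow> (t, u) \<in> sim I \<longrightarrow>
        (\<forall>f\<in>parts I s. sigma I t u (sigma I s t f) = sigma I s u f)"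
    and c14: "\<forall>i j f g. (i, j) \<in> sim I \<longrightarrow> i \<noteq> j \<longrightarrow> f \<in> parts I i \<longrightarrow> g \<in> parts I j \<longrightarrow>
        {f, g} \<in> Xs I"
  using assms unfolding is_dci_def apply -
  apply (elim conjE, assumption)+
  done

lemma dci_facts:
  assumes "is_dci I"
  shows "\<And>i j. i \<in> {1..kk I} \<Longrightarrow> j \<in> {1..kk I} \<Longrightarrow> i \<noteq> j \<Longrightarrow> parts I i \<inter> parts I j = {}"
    and "sim I \<subseteq> {1..kk I} \<times> {1..kk I}"
    and "\<And>i. i \<in> {1..kk I} \<Longrightarrow> (i, i) \<in> sim I"
    and "\<And>i j. (i, j) \<in> sim I \<Longrightarrow> (j, i) \<in> sim I"
    and "\<And>i j l. (i, j) \<in> sim I \<Longrightarrow> (j, l) \<in> sim I \<Longrightarrow> (i, l) \<in> sim I"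
    and "\<And>s t f. (s, t) \<in> sim I \<Longrightarrow> f \<in> parts I s \<Longrightarrow> sigma I s t f \<in> parts I t"
    and "\<And>s f. s \<in> {1..kk I} \<Longrightarrow> f \<in> parts I s \<Longrightarrow> sigma I s s f = f"
    and "\<And>i j f g. (i, j) \<in> sim I \<Longrightarrow> i \<noteq> j \<Longrightarrow> f \<in> parts I i \<Longrightarrow> g \<in> parts I j \<Longrightarrow> {f, g} \<in> Xs I"
    and "\<And>d. pi I d \<subseteq> feats I"
    and "\<And>d X. X \<in> Xs I \<Longrightarrow> \<not> X \<subseteq> pi I d"
proof -
  note E = c7[OF assms]
  show "\<And>i j. i \<in> {1..kk I} \<Longrightarrow> j \<in> {1..kk I} \<Longrightarrow> i \<noteq> j \<Longrightarrow> parts I i \<inter> parts I j = {}"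
    using c3[OF assms] by blast
  show S: "sim I \<subseteq> {1..kk I} \<times> {1..kk I}" using E unfolding equiv_def refl_on_def by blast
  show "\<And>i. i \<in> {1..kk I} \<Longrightarrow> (i, i) \<in> sim I" using E unfolding equiv_def refl_on_def by blast
  show "\<And>i j. (i, j) \<in> sim I \<Longrightarrow> (j, i) \<in> sim I" using E unfolding equiv_def sym_def by blast
  show "\<And>i j l. (i, j) \<in> sim I \<Longrightarrow> (j, l) \<in> sim I \<Longrightarrow> (i, l) \<in> sim I"
    using E unfolding equiv_def trans_def by blast
  show "\<And>s t f. (s, t) \<in> sim I \<Longrightarrow> f \<in> parts I s \<Longrightarrow> sigma I s t f \<in> parts I t"
  proof -
    fix s t f assume "(s, t) \<in> sim I" "f \<in> parts I s"
    then have "bij_betw (sigma I s t) (parts I s) (parts I t)" using c8[OF assms] by blast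
    then show "sigma I s t f \<in> parts I t" using \<open>f \<in> parts I s\<close> bij_betwE by blast
  qed
  show "\<And>s f. s \<in> {1..kk I} \<Longrightarrow> f \<in> parts I s \<Longrightarrow> sigma I s s f = f"
  proof -
    fix s f assume s: "s \<in> {1..kk I}" and f: "f \<in> parts I s"
    have ss: "(s, s) \<in> sim I" using E s unfolding equiv_def refl_on_def by blast
    have 1: "sigma I s s (sigma I s s f) = f" using c11[OF assms] ss f by blast
    have 2: "sigma I s s (sigma I s s f) = sigma I s s f" using c12[OF assms] ss f by blast
    show "sigma I s s f = f" using 1 2 by simp
  qed
  show "\<And>i j f g. (i, j) \<in> sim I \<Longrightarrow> i \<noteq> j \<Longrightarrow> f \<in> parts I i \<Longrightarrow> g \<in> parts I j \<Longrightarrow> {f, g} \<in> Xs I"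
    using c14[OF assms] by blast
  show "\<And>d. pi I d \<subseteq> feats I" using c6[OF assms] by blast
  show "\<And>d X. X \<in> Xs I \<Longrightarrow> \<not> X \<subseteq> pi I d" using c9[OF assms] by blast
qed

lemma dt_part:
  assumes D: "is_dci I" and U: "admissible_U I U" and s: "s \<in> {1..kk I}"
  shows "\<exists>t. (s, t) \<in> sim I \<and> (\<forall>f\<in>parts I s. dom_trans I U f = sigma I s t f \<and> sigma I s t f \<in> parts I t)"
proof (cases "\<exists>t. (s, t) \<in> U")
  case True
  then obtain t where st: "(s, t) \<in> U" by blast
  have Us: "U \<subseteq> sim I" and inj: "inj_on fst U" using U unfolding admissible_U_def by auto
  have simt: "(s, t) \<in> sim I" using st Us by blast
  have "\<forall>f\<in>parts I s. dom_trans I U f = sigma I s t f"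
  proof
    fix f assume f: "f \<in> parts I s"
    have uniq: "\<And>p. p \<in> U \<and> f \<in> parts I (fst p) \<Longrightarrow> p = (s, t)"
    proof -
      fix p assume p: "p \<in> U \<and> f \<in> parts I (fst p)"
      have "fst p \<in> {1..kk I}" using p Us dci_facts(2)[OF D] by force
      then have "fst p = s" using dci_facts(1)[OF D, of "fst p" s] p f s by blast
      then show "p = (s, t)" using inj p st unfolding inj_on_def by force
    qed
    have "(THE p. p \<in> U \<and> f \<in> parts I (fst p)) = (s, t)"
      using uniq st f by (intro the_equality) auto
    then show "dom_trans I U f = sigma I s t f" using st f unfolding dom_trans_def Let_def by force
  qed
  then show ?thesis using simt dci_facts(6)[OF D simt] by blast
next
  case False
  have Us: "U \<subseteq> sim I" using U unfolding admissible_U_def by auto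
  have "\<forall>f\<in>parts I s. dom_trans I U f = f"
  proof
    fix f assume f: "f \<in> parts I s"
    have "\<not> (\<exists>p\<in>U. f \<in> parts I (fst p))"
    proof
      assume "\<exists>p\<in>U. f \<in> parts I (fst p)"
      then obtain p where p: "p \<in> U" "f \<in> parts I (fst p)" by blast
      have "fst p \<in> {1..kk I}" using p Us dci_facts(2)[OF D] by force
      then have "fst p = s" using dci_facts(1)[OF D, of "fst p" s] p f s by blast
      then show False using False p by (metis prod.collapse)
    qed
    then show "dom_trans I U f = f" unfolding dom_trans_def by simp
  qed
  then show ?thesis using dci_facts(3)[OF D s] dci_facts(7)[OF D s] by auto
qed

lemma dt_id:
  assumes D: "is_dci I" and U: "admissible_U I U" and s: "s \<in> {1..kk I}" and ns: "s \<notin> fst ` U"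
    and f: "f \<in> parts I s"
  shows "dom_trans I U f = f"
proof -
  have Us: "U \<subseteq> sim I" using U unfolding admissible_U_def by auto
  have "\<not> (\<exists>p\<in>U. f \<in> parts I (fst p))"
  proof
    assume "\<exists>p\<in>U. f \<in> parts I (fst p)"
    then obtain p where p: "p \<in> U" "f \<in> parts I (fst p)" by blast
    have "fst p \<in> {1..kk I}" using p Us dci_facts(2)[OF D] by force
    then have "fst p = s" using dci_facts(1)[OF D, of "fst p" s] p f s by blast
    then show False using ns p by force
  qed
  then show ?thesis unfolding dom_trans_def by simp
qed

lemma phi_feats: assumes "is_dci I" shows "phi I S \<subseteq> feats I"
proof (cases "S = {}")
  case True
  then show ?thesis unfolding phi_def by simp
next
  case False
  then obtain x where x: "x \<in> S" by blast
  then have "\<Inter> (pi I ` S) \<subseteq> pi I x" by blast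
  then show ?thesis using False dci_facts(9)[OF assms, of x] unfolding phi_def by simp
qed

lemma phi_mono_incl:
  assumes D: "is_dci I" and "S \<subseteq> T"
  shows "phi I T \<subseteq> phi I S"
proof (cases "S = {}")
  case True
  then show ?thesis using phi_feats[OF D] unfolding phi_def by simp
next
  case False
  then show ?thesis using assms unfolding phi_def by auto
qed

lemma in_feats: "f \<in> feats I \<Longrightarrow> \<exists>a\<in>{1..kk I}. f \<in> parts I a"
  unfolding feats_def by blast

lemma getmu:
  assumes "g \<in> mu I C D"
  shows "\<exists>U. g = dom_trans I U \<and> admissible_U I U \<and> phi I (ext I D) = g ` phi I (ext I C)
     \<and> fst ` U \<subseteq> delta I C"
  using assms unfolding mu_def by blast

theorem proposition11:
  fixes I :: "('d, 'c, 'r, 'f) dci"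
    and C1 C2 C3 C4 D1 D2 D3 D4 :: "('c, 'r) concept"
  assumes "is_dci I"
    and "nat_fs I C1" "nat_fs I C2" "nat_fs I C3" "nat_fs I C4"
    and "nat_fs I D1" "nat_fs I D2" "nat_fs I D3" "nat_fs I D4"
    and "ext I C1 \<noteq> {}"
    and "sat_analogy I C1 C2 C3 C4"
    and "sat_analogy I D1 D2 D3 D4"
    and "sat_analogy I D1 D3 D2 D4"
    and "sat_inclusion I C1 D1" "sat_inclusion I C2 D2" "sat_inclusion I C3 D3"
  shows "sat_inclusion I C4 D4"
proof -
  note D = assms(1)
  define c1 where "c1 = phi I (ext I C1)"
  define c2 where "c2 = phi I (ext I C2)"
  define c3 where "c3 = phi I (ext I C3)"
  define c4 where "c4 = phi I (ext I C4)"
  define d1 where "d1 = phi I (ext I D1)"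
  define d2 where "d2 = phi I (ext I D2)"
  define d3 where "d3 = phi I (ext I D3)"
  define d4 where "d4 = phi I (ext I D4)"
  have dc1: "d1 \<subseteq> c1" using phi_mono_incl[OF D] assms(14) unfolding sat_inclusion_def d1_def c1_def by blast
  have dc2: "d2 \<subseteq> c2" using phi_mono_incl[OF D] assms(15) unfolding sat_inclusion_def d2_def c2_def by blast
  have dc3: "d3 \<subseteq> c3" using phi_mono_incl[OF D] assms(16) unfolding sat_inclusion_def d3_def c3_def by blast
  obtain x0 where x0: "x0 \<in> ext I C1" using assms(10) by blast
  have c1pi: "c1 \<subseteq> pi I x0" using x0 unfolding c1_def phi_def by auto
  have c1cons: "\<And>a b z w. (a, b) \<in> sim I \<Longrightarrow> z \<in> c1 \<Longrightarrow> w \<in> c1 \<Longrightarrow> z \<in> parts I a \<Longrightarrow> w \<in> parts I b \<Longrightarrow> a = b"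
  proof (rule ccontr)
    fix a b z w assume "(a, b) \<in> sim I" "z \<in> c1" "w \<in> c1" "z \<in> parts I a" "w \<in> parts I b" "a \<noteq> b"
    then have "{z, w} \<in> Xs I" using dci_facts(8)[OF D] by blast
    moreover have "{z, w} \<subseteq> pi I x0" using c1pi \<open>z \<in> c1\<close> \<open>w \<in> c1\<close> by blast
    ultimately show False using dci_facts(10)[OF D] by blast
  qed
  have c1f: "c1 \<subseteq> feats I" using phi_feats[OF D] unfolding c1_def by blast
  have d3f: "d3 \<subseteq> feats I" using phi_feats[OF D] unfolding d3_def by blast
  obtain tau where tau1: "tau \<in> mu I C1 C2" and tau2: "tau \<in> mu I C3 C4"
    using assms(11) unfolding sat_analogy_def by blast
  obtain rho where rho1: "rho \<in> mu I D1 D2" and rho2: "rho \<in> mu I D3 D4"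
    using assms(12) unfolding sat_analogy_def by blast
  obtain nu where nu1: "nu \<in> mu I D1 D3"
    using assms(13) unfolding sat_analogy_def by blast
  obtain Ut where Ut: "tau = dom_trans I Ut" "admissible_U I Ut" "c2 = tau ` c1" "fst ` Ut \<subseteq> delta I C1"
    using getmu[OF tau1] unfolding c1_def c2_def by blast
  have c4e: "c4 = tau ` c3" using getmu[OF tau2] unfolding c3_def c4_def by blast
  obtain Ur where Ur: "rho = dom_trans I Ur" "admissible_U I Ur" "d2 = rho ` d1" "fst ` Ur \<subseteq> delta I D1"
    using getmu[OF rho1] unfolding d1_def d2_def by blast
  have d4e: "d4 = rho ` d3" using getmu[OF rho2] unfolding d3_def d4_def by blast
  obtain Uv where Uv: "nu = dom_trans I Uv" "admissible_U I Uv" "d3 = nu ` d1"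
    using getmu[OF nu1] unfolding d1_def d3_def by blast
  have claim1: "\<forall>f\<in>parts I a. tau f = rho f" if a: "a \<in> {1..kk I}" and z: "z \<in> d1" "z \<in> parts I a" for a z
  proof -
    obtain t1 where t1: "(a, t1) \<in> sim I" "\<forall>f\<in>parts I a. tau f = sigma I a t1 f \<and> sigma I a t1 f \<in> parts I t1"
      using dt_part[OF D Ut(2) a] Ut(1) by blast
    obtain t2 where t2: "(a, t2) \<in> sim I" "\<forall>f\<in>parts I a. rho f = sigma I a t2 f \<and> sigma I a t2 f \<in> parts I t2"
      using dt_part[OF D Ur(2) a] Ur(1) by blast
    have "rho z \<in> c2" using z dc2 Ur(3) by blast
    then have "rho z \<in> tau ` c1" using Ut(3) by simp
    then obtain w where w: "w \<in> c1" "rho z = tau w" by (elim imageE) simp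
    obtain e where e: "e \<in> {1..kk I}" "w \<in> parts I e" using in_feats[of w I] w c1f by blast
    obtain t3 where t3: "(e, t3) \<in> sim I" "\<forall>f\<in>parts I e. tau f = sigma I e t3 f \<and> sigma I e t3 f \<in> parts I t3"
      using dt_part[OF D Ut(2) e(1)] Ut(1) by blast
    have K: "t2 \<in> {1..kk I}" "t3 \<in> {1..kk I}" "t1 \<in> {1..kk I}"
      using t1 t2 t3 dci_facts(2)[OF D] by auto
    have "rho z \<in> parts I t2" "rho z \<in> parts I t3" using t2 t3 z e w by auto
    then have "t2 = t3" using dci_facts(1)[OF D] K by blast
    then have "(a, e) \<in> sim I" using t2 t3 dci_facts(4,5)[OF D] by metis
    then have ae: "a = e" using c1cons z w e dc1 by blast
    have "tau w \<in> parts I t1" "tau w \<in> parts I t3" using t1 t3 e ae by auto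
    then have "t1 = t3" using dci_facts(1)[OF D] K by blast
    then show ?thesis using t1 t2 \<open>t2 = t3\<close> by auto
  qed
  have "d4 \<subseteq> c4"
  proof
    fix x assume "x \<in> d4"
    then obtain y where y: "y \<in> d3" "x = rho y" using d4e by blast
    obtain z where z: "z \<in> d1" "y = nu z" using y Uv(3) by blast
    obtain a where a: "a \<in> {1..kk I}" "z \<in> parts I a" using in_feats[of z I] z dc1 c1f by blast
    obtain b where b: "b \<in> {1..kk I}" "y \<in> parts I b" using in_feats[of y I] y d3f by blast
    obtain tb where tb: "(a, tb) \<in> sim I" "\<forall>f\<in>parts I a. nu f = sigma I a tb f \<and> sigma I a tb f \<in> parts I tb"
      using dt_part[OF D Uv(2) a(1)] Uv(1) by blast
    have "tb \<in> {1..kk I}" using tb(1) dci_facts(2)[OF D] by blast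
    moreover have "y \<in> parts I tb" using tb z a by auto
    ultimately have "tb = b" using b dci_facts(1)[OF D] by blast
    with tb have ab: "(a, b) \<in> sim I" by simp
    have "tau y = rho y"
    proof (cases "d1 \<inter> parts I b = {}")
      case False
      then show ?thesis using claim1[OF b(1)] b by blast
    next
      case True
      have nr: "b \<notin> fst ` Ur"
      proof
        assume "b \<in> fst ` Ur"
        then have "b \<in> delta I D1" using Ur(4) by blast
        then show False using True unfolding delta_def d1_def by blast
      qed
      have nt: "b \<notin> fst ` Ut"
      proof
        assume "b \<in> fst ` Ut"
        then have "b \<in> delta I C1" using Ut(4) by blast
        then obtain w where w: "w \<in> c1" "w \<in> parts I b" unfolding delta_def c1_def by blast
        then have "a = b" using c1cons[OF ab] z a dc1 by blast
        then show False using True z a by blast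
      qed
      show ?thesis using dt_id[OF D Ur(2) b(1) nr b(2)] dt_id[OF D Ut(2) b(1) nt b(2)] Ut(1) Ur(1) by simp
    qed
    then have "x = tau y" using y by simp
    moreover have "y \<in> c3" using y dc3 by blast
    ultimately show "x \<in> c4" using c4e by simp
  qed
  have e4: "ext I C4 = {d. c4 \<subseteq> pi I d}" using assms(5) unfolding nat_fs_def fully_specified_def c4_def by blast
  have e4': "ext I D4 = {d. d4 \<subseteq> pi I d}" using assms(9) unfolding nat_fs_def fully_specified_def d4_def by blast
  show ?thesis unfolding sat_inclusion_def e4 e4' using \<open>d4 \<subseteq> c4\<close> by blast
qed

end
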